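(* Let $C_1,C_2,C_3>0$. Consider gradient descent $\theta(k+1)=\theta(k)-\eta\frac{\partial L(\theta(k))}{\partial\theta}$, $\theta(k)=\mathrm{vec}(W(k),A(k),b(k))$, with gradients given by the formulas in the context. Let $\alpha_0:=\sigma_{\min}(Z(0))$, $\lambda_1:=\|W(0)\|+C_1$, $\lambda_2:=\|A(0)\|+C_2$, $\lambda_3:=\|b(0)\|+C_3$, choose $\gamma>0$ with $\gamma_0:=\gamma\lambda_2<1$, and let $\lambda_0:=\max\left\{\frac{\lambda_1}{C_3},\frac{\gamma_0\lambda_1\lambda_3}{(1-\gamma_0)C_2\lambda_2},\frac{\lambda_3}{C_1}\right\}$ and $\kappa:=1+\frac{\gamma_0^2}{(1-\gamma_0)^2}\frac{\lambda_1^2}{\lambda_2^2}$. Assume $$\alpha_0^2\ge\frac{8}{1-\gamma_0}\lambda_0\|X\|_F\|\hat y(0)-y\|,\quad \alpha_0^3\ge\kappa\frac{16\lambda_3}{(1-\gamma_0)^2}\|X\|_F^2\|\hat y(0)-y\|,\quad \alpha_0^2\ge\kappa\frac{16\lambda_3^2}{(1-\gamma_0)^2}\|X\|_F^2,$$ and choose the step size $$0<\eta<\min\left\{\frac{4}{\alpha_0^2},\,2(1-\gamma_0)^2\,\overline\lambda\,\lambda_1^{-4}\lambda_3^{-2}\|X\|_F^{-2}\right\},\qquad \overline\lambda:=\kappa\left(\kappa\lambda_1^{-2}+\lambda_3^{-2}\right)^{-2}.$$ Then for all $k\ge0$: (i) $\|W(k)\|\le\lambda_1$, $\|A(k)\|\le\lambda_2$,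 $\|b(k)\|\le\lambda_3$ (in particular $Z(k)$ is well defined); (ii) $\sigma_{\min}(Z(k))\ge\alpha_0/2$; (iii) $L(\theta(k))\le(1-\eta\alpha_0^2/4)^kL(\theta(0))$.
   Context: Data $X\in\mathbb{R}^{N\times d}$, $y\in\mathbb{R}^N$; parameters $W\in\mathbb{R}^{d\times m}$, $A\in\mathbb{R}^{m\times m}$, $b\in\mathbb{R}^m$. $\sigma(u)=\max\{0,u\}$ entrywise, $\sigma'(u)=\mathbf 1\{u>0\}$ entrywise. $\Phi=\sigma(XW)$; $Z$ is the unique solution of $Z=\sigma(\gamma ZA+\Phi)$ (exists when $\gamma\|A\|<1$); $\hat y=Zb$; $L(\theta)=\frac12\|\hat y-y\|^2$. $D:=\mathrm{diag}[\mathrm{vec}(\sigma'(\gamma ZA+\Phi))]$, $E:=\mathrm{diag}[\mathrm{vec}(\sigma'(XW))]$, $Q:=I_{Nm}-\gamma D(A^T\otimes I_N)$. Gradients: $\frac{\partial L}{\partial W}=[DE(I_m\otimes X)]^TQ^{-T}(b^T\otimes I_N)^T(\hat y-y)$, $\frac{\partial L}{\partial A}=\gamma[D(I_m\otimes Z)]^TQ^{-T}(b^T\otimes I_N)^T(\hat y-y)$, $\frac{\partial L}{\partial b}=Z^T(\hat y-y)$ (gradients w.r.t. $\mathrm{vec}(W)$, $\mathrm{vec}(A)$, $b$). $\|\cdot\|$ is the spectral norm (Euclidean for vectors), $\|\cdot\|_F$ the Frobenius norm, $\sigma_{\min}(Z)=\sqrt{\lambda_{\min}(ZZ^T)}$.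 *)

theory Defs
  imports "HOL-Analysis.Analysis"
begin

text \<open>An r x c real matrix is an element of real^'c^'r (rows indexed by 'r, columns by 'c).
  Column-major vectorisation: vec M is indexed by pairs (column, row).
  Kronecker product: (P kron R) at row (i1,i2), column (j1,j2) is P i1 j1 * R i2 j2;
  with these conventions vec (P ** M ** R) = (transpose R kron P) *v vec M.\<close>

definition vecm :: "real^'c^'r \<Rightarrow> real^('c \<times> 'r)" where
  "vecm M = (\<chi> p. M $ snd p $ fst p)"

definition kron :: "real^'q^'p \<Rightarrow> real^'s^'r \<Rightarrow> real^('q \<times> 's)^('p \<times> 'r)" where
  "kron P R = (\<chi> i j. P $ fst i $ fst j * R $ snd i $ snd j)"

definition diagm :: "real^'n \<Rightarrow> real^'n^'n" where
  "diagm v = (\<chi> i j. if i = j then v $ i else 0)"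

definition colmat :: "real^'n \<Rightarrow> real^1^'n" where
  "colmat v = (\<chi> i j. v $ i)"

definition relu :: "real^'c^'r \<Rightarrow> real^'c^'r" where
  "relu M = (\<chi> i j. max 0 (M $ i $ j))"

definition relu' :: "real^'c^'r \<Rightarrow> real^'c^'r" where
  "relu' M = (\<chi> i j. if M $ i $ j > 0 then 1 else 0)"

definition specnorm :: "real^'c^'r \<Rightarrow> real" where
  "specnorm M = onorm (\<lambda>x. M *v x)"

definition frob :: "real^'c^'r \<Rightarrow> real" where
  "frob M = sqrt (\<Sum>i\<in>UNIV. \<Sum>j\<in>UNIV. (M $ i $ j)^2)"

definition lambda_min :: "real^'n^'n \<Rightarrow> real" where
  "lambda_min M = Min {\<mu>. \<exists>v. v \<noteq> 0 \<and> M *v v = \<mu> *\<^sub>R v}"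

definition sigma_min :: "real^'c^'r \<Rightarrow> real" where
  "sigma_min Z = sqrt (lambda_min (Z ** transpose Z))"

definition Phi :: "real^'d^'N \<Rightarrow> real^'m^'d \<Rightarrow> real^'m^'N" where
  "Phi X W = relu (X ** W)"

definition is_equil :: "real \<Rightarrow> real^'d^'N \<Rightarrow> real^'m^'d \<Rightarrow> real^'m^'m \<Rightarrow> real^'m^'N \<Rightarrow> bool" where
  "is_equil \<gamma> X W A Z \<longleftrightarrow> Z = relu (\<gamma> *\<^sub>R (Z ** A) + Phi X W)"

definition Zeq :: "real \<Rightarrow> real^'d^'N \<Rightarrow> real^'m^'d \<Rightarrow> real^'m^'m \<Rightarrow> real^'m^'N" where
  "Zeq \<gamma> X W A = (THE Z. is_equil \<gamma> X W A Z)"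

definition yhat :: "real \<Rightarrow> real^'d^'N \<Rightarrow> real^'m^'d \<Rightarrow> real^'m^'m \<Rightarrow> real^'m \<Rightarrow> real^'N" where
  "yhat \<gamma> X W A b = Zeq \<gamma> X W A *v b"

definition loss :: "real \<Rightarrow> real^'d^'N \<Rightarrow> real^'N \<Rightarrow> real^'m^'d \<Rightarrow> real^'m^'m \<Rightarrow> real^'m \<Rightarrow> real" where
  "loss \<gamma> X y W A b = 1/2 * (norm (yhat \<gamma> X W A b - y))^2"

definition Dm :: "real \<Rightarrow> real^'d^'N \<Rightarrow> real^'m^'d \<Rightarrow> real^'m^'m \<Rightarrow> real^('m \<times> 'N)^('m \<times> 'N)" where
  "Dm \<gamma> X W A = diagm (vecm (relu' (\<gamma> *\<^sub>R (Zeq \<gamma> X W A ** A) + Phi X W)))"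

definition Em :: "real^'d^'N \<Rightarrow> real^'m^'d \<Rightarrow> real^('m \<times> 'N)^('m \<times> 'N)" where
  "Em X W = diagm (vecm (relu' (X ** W)))"

definition Qm :: "real \<Rightarrow> real^'d^'N \<Rightarrow> real^'m^'d \<Rightarrow> real^'m^'m \<Rightarrow> real^('m \<times> 'N)^('m \<times> 'N)" where
  "Qm \<gamma> X W A = mat 1 - \<gamma> *\<^sub>R (Dm \<gamma> X W A ** kron (transpose A) (mat 1 :: real^'N^'N))"

definition backprop :: "real \<Rightarrow> real^'d^'N \<Rightarrow> real^'N \<Rightarrow> real^'m^'d \<Rightarrow> real^'m^'m \<Rightarrow> real^'m \<Rightarrow> real^('m \<times> 'N)" where
  "backprop \<gamma> X y W A b =
     matrix_inv (transpose (Qm \<gamma> X W A))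
     *v (transpose (kron (transpose (colmat b)) (mat 1 :: real^'N^'N))
         *v vecm (colmat (yhat \<gamma> X W A b - y)))"

definition gradW :: "real \<Rightarrow> real^'d^'N \<Rightarrow> real^'N \<Rightarrow> real^'m^'d \<Rightarrow> real^'m^'m \<Rightarrow> real^'m \<Rightarrow> real^('m \<times> 'd)" where
  "gradW \<gamma> X y W A b =
     transpose (Dm \<gamma> X W A ** Em X W ** kron (mat 1 :: real^'m^'m) X) *v backprop \<gamma> X y W A b"

definition gradA :: "real \<Rightarrow> real^'d^'N \<Rightarrow> real^'N \<Rightarrow> real^'m^'d \<Rightarrow> real^'m^'m \<Rightarrow> real^'m \<Rightarrow> real^('m \<times> 'm)" where
  "gradA \<gamma> X y W A b =
     \<gamma> *\<^sub>R (transpose (Dm \<gamma> X W A ** kron (mat 1 :: real^'m^'m) (Zeq \<gamma> X W A)) *v backprop \<gamma> X y W A b)"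

definition gradb :: "real \<Rightarrow> real^'d^'N \<Rightarrow> real^'N \<Rightarrow> real^'m^'d \<Rightarrow> real^'m^'m \<Rightarrow> real^'m \<Rightarrow> real^'m" where
  "gradb \<gamma> X y W A b = transpose (Zeq \<gamma> X W A) *v (yhat \<gamma> X W A b - y)"

end

theory Submission
  imports Defs
begin

lemma norm_sq_vec: "(norm (x::'a::real_normed_vector^'n))^2 = (\<Sum>i\<in>UNIV. (norm (x$i))^2)"
  unfolding norm_vec_def L2_set_def by (simp add: sum_nonneg)

lemma norm_sq_real: "(norm (x::real^'n))^2 = (\<Sum>i\<in>UNIV. (x$i)^2)"
  by (simp add: norm_sq_vec)

lemma norm_sq_mat: "(norm (M::real^'c^'r))^2 = (\<Sum>i\<in>UNIV. \<Sum>j\<in>UNIV. (M$i$j)^2)"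
  by (simp add: norm_sq_vec)

lemma frob_eq: "frob M = norm M"
  unfolding frob_def by (metis norm_sq_mat norm_ge_zero real_sqrt_unique)

lemma sum_pair_UNIV: "(\<Sum>p\<in>(UNIV::('a::finite\<times>'b::finite) set). f p) = (\<Sum>a\<in>UNIV. \<Sum>b\<in>UNIV. f (a,b))"
  by (simp add: sum.cartesian_product)

lemma norm_vecm: "norm (vecm M) = norm M"
proof -
  have "(norm (vecm M))^2 = (norm M)^2"
    unfolding norm_sq_real norm_sq_mat sum_pair_UNIV vecm_def
    by simp (rule sum.swap)
  thus ?thesis by (simp add: power2_eq_iff_nonneg)
qed

lemma vecm_diff: "vecm (M - M') = vecm M - vecm M'"
  by (simp add: vecm_def vec_eq_iff)

lemma norm_transpose: "norm (transpose (M::real^'c^'r)) = norm M"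
proof -
  have "(norm (transpose M))^2 = (norm M)^2"
    unfolding norm_sq_mat transpose_def
    by simp (rule sum.swap)
  thus ?thesis by (simp add: power2_eq_iff_nonneg)
qed

lemma mv_bound: "norm ((M::real^'c^'r) *v x) \<le> norm M * norm x"
proof -
  have "(norm (M *v x))^2 \<le> (norm M * norm x)^2"
  proof -
    have "(norm (M *v x))^2 = (\<Sum>i\<in>UNIV. (inner (M$i) x)^2)"
      by (simp add: norm_sq_real matrix_vector_mul_component)
    also have "\<dots> \<le> (\<Sum>i\<in>UNIV. (norm (M$i))^2 * (norm x)^2)"
    proof (rule sum_mono)
      fix i
      have "\<bar>inner (M$i) x\<bar> \<le> norm (M$i) * norm x" by (rule Cauchy_Schwarz_ineq2)
      hence "\<bar>inner (M$i) x\<bar>^2 \<le> (norm (M$i) * norm x)^2" by (rule power_mono) simp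
      thus "(inner (M$i) x)^2 \<le> (norm (M$i))^2 * (norm x)^2" by (simp add: power_mult_distrib)
    qed
    also have "\<dots> = (norm M * norm x)^2"
      by (simp add: norm_sq_vec[of M] sum_distrib_right power_mult_distrib)
    finally show ?thesis .
  qed
  thus ?thesis by (simp add: power2_le_iff_abs_le)
qed

lemma specnorm_bound: "norm ((M::real^'c^'r) *v x) \<le> specnorm M * norm x"
  unfolding specnorm_def by (rule onorm) simp

lemma specnorm_nonneg: "0 \<le> specnorm (M::real^'c^'r)"
  unfolding specnorm_def by (rule onorm_pos_le) simp

lemma specnorm_le_norm: "specnorm (M::real^'c^'r) \<le> norm M"
  unfolding specnorm_def by (rule onorm_le) (simp add: mv_bound)

lemma specnorm_triangle: "specnorm ((M::real^'c^'r) + M') \<le> specnorm M + specnorm M'"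
proof -
  have "specnorm (M + M') = onorm (\<lambda>x. M *v x + M' *v x)"
    unfolding specnorm_def by (simp add: matrix_vector_mult_add_rdistrib[symmetric])
  also have "\<dots> \<le> onorm ((*v) M) + onorm ((*v) M')"
    by (rule onorm_triangle) simp_all
  finally show ?thesis unfolding specnorm_def by (simp add:)
qed

lemma specnorm_transpose_le: "specnorm (transpose (M::real^'c^'r)) \<le> specnorm M"
  unfolding specnorm_def[of "transpose M"]
proof (rule onorm_le)
  fix x :: "real^'r"
  have "(norm (transpose M *v x))^2 = inner (transpose M *v x) (transpose M *v x)"
    by (simp add: power2_norm_eq_inner)
  also have "\<dots> = inner (M *v (transpose M *v x)) x"
    by (simp add: dot_lmul_matrix vector_transpose_matrix inner_commute)
  also have "\<dots> \<le> norm (M *v (transpose M *v x)) * norm x"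
    by (rule norm_cauchy_schwarz)
  also have "\<dots> \<le> specnorm M * norm (transpose M *v x) * norm x"
    by (rule mult_right_mono[OF specnorm_bound]) simp
  finally have h: "(norm (transpose M *v x))^2 \<le> specnorm M * norm x * norm (transpose M *v x)"
    by (simp add: algebra_simps)
  show "norm (transpose M *v x) \<le> specnorm M * norm x"
  proof (cases "norm (transpose M *v x) = 0")
    case True thus ?thesis using specnorm_nonneg[of M] by simp
  next
    case False
    hence p: "norm (transpose M *v x) > 0" by simp
    from h have "norm (transpose M *v x) * norm (transpose M *v x) \<le> (specnorm M * norm x) * norm (transpose M *v x)"
      by (simp add: power2_eq_square algebra_simps)
    thus ?thesis using p by (rule mult_right_le_imp_le)
  qed
qed

lemma specnorm_transpose: "specnorm (transpose (M::real^'c^'r)) = specnorm M"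
  by (metis antisym specnorm_transpose_le transpose_transpose)


lemma mm_row: "((M::real^'k^'r) ** (A::real^'c^'k)) $ i = transpose A *v (M $ i)"
  by (simp add: vec_eq_iff matrix_matrix_mult_def matrix_vector_mult_def transpose_def) (simp add: mult.commute)

lemma mat_sub_r: "((A::real^'k^'r) - B) ** (C::real^'c^'k) = A ** C - B ** C"
  by (simp add: vec_eq_iff matrix_matrix_mult_def sum_subtractf algebra_simps)
lemma mat_sub_l: "(C::real^'k^'r) ** ((A::real^'c^'k) - B) = C ** A - C ** B"
  by (simp add: vec_eq_iff matrix_matrix_mult_def sum_subtractf algebra_simps)

lemma mm_spec: "norm ((M::real^'k^'r) ** (A::real^'c^'k)) \<le> norm M * specnorm A"
proof -
  have "(norm (M ** A))^2 \<le> (norm M * specnorm A)^2"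
  proof -
    have "(norm (M ** A))^2 = (\<Sum>i\<in>UNIV. (norm (transpose A *v (M$i)))^2)"
      by (simp add: norm_sq_vec[of "M ** A"] mm_row)
    also have "\<dots> \<le> (\<Sum>i\<in>UNIV. (specnorm A)^2 * (norm (M$i))^2)"
    proof (rule sum_mono)
      fix i
      have "norm (transpose A *v (M$i)) \<le> specnorm A * norm (M$i)"
        using specnorm_bound[of "transpose A" "M$i"] by (simp add: specnorm_transpose)
      hence "(norm (transpose A *v (M$i)))^2 \<le> (specnorm A * norm (M$i))^2"
        by (rule power_mono) simp
      thus "(norm (transpose A *v (M$i)))^2 \<le> (specnorm A)^2 * (norm (M$i))^2"
        by (simp add: power_mult_distrib)
    qed
    also have "\<dots> = (norm M * specnorm A)^2"
      by (simp add: norm_sq_vec[of M] sum_distrib_left power_mult_distrib mult.commute)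
    finally show ?thesis .
  qed
  moreover have "0 \<le> norm M * specnorm A" using specnorm_nonneg[of A] by simp
  ultimately show ?thesis by (simp add: power2_le_iff_abs_le)
qed

lemma mm_frob: "norm ((M::real^'k^'r) ** (A::real^'c^'k)) \<le> norm M * norm A"
  by (meson mm_spec specnorm_le_norm mult_left_mono norm_ge_zero order_trans)

lemma relu_lip: "norm (relu M - relu M') \<le> norm (M - M')"
proof (rule norm_le_componentwise_cart)
  fix i
  show "norm ((relu M - relu M') $ i) \<le> norm ((M - M') $ i)"
  proof (rule norm_le_componentwise_cart)
    fix j
    show "norm ((relu M - relu M') $ i $ j) \<le> norm ((M - M') $ i $ j)"
      by (simp add: relu_def)
  qed
qed

lemma relu_zero: "relu 0 = 0"
  by (simp add: relu_def vec_eq_iff)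

lemma relu_norm: "norm (relu M) \<le> norm M"
  using relu_lip[of M 0] by (simp add: relu_zero)

lemma equil_unique:
  assumes "0 \<le> \<gamma>" "\<gamma> * specnorm A < 1"
  shows "\<exists>!Z. is_equil \<gamma> X W A Z"
proof -
  let ?f = "\<lambda>Z. relu (\<gamma> *\<^sub>R (Z ** A) + Phi X W)"
  have "\<exists>!Z. ?f Z = Z"
  proof (rule banach_fix_type)
    show "0 \<le> \<gamma> * specnorm A" using assms specnorm_nonneg[of A] by simp
    show "\<gamma> * specnorm A < 1" by fact
    show "\<forall>x y. dist (?f x) (?f y) \<le> \<gamma> * specnorm A * dist x y"
    proof (intro allI)
      fix x y :: "real^'a^'b"
      have "dist (?f x) (?f y) \<le> norm (\<gamma> *\<^sub>R (x ** A) - \<gamma> *\<^sub>R (y ** A))"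
        unfolding dist_norm using relu_lip by (metis add_diff_cancel_right)
      also have "\<dots> = \<gamma> * norm ((x - y) ** A)"
        using assms(1) by (simp add: mat_sub_r scaleR_diff_right[symmetric])
      also have "\<dots> \<le> \<gamma> * (norm (x - y) * specnorm A)"
        by (rule mult_left_mono[OF mm_spec assms(1)])
      finally show "dist (?f x) (?f y) \<le> \<gamma> * specnorm A * dist x y"
        by (simp add: dist_norm mult_ac)
    qed
  qed
  thus ?thesis unfolding is_equil_def by (metis (no_types, lifting))
qed

lemma Zeq_equil:
  assumes "0 \<le> \<gamma>" "\<gamma> * specnorm A < 1"
  shows "Zeq \<gamma> X W A = relu (\<gamma> *\<^sub>R (Zeq \<gamma> X W A ** A) + Phi X W)"
  using theI'[OF equil_unique[OF assms, of X W]] unfolding Zeq_def is_equil_def by blast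

lemma Phi_norm: "norm (Phi X W) \<le> norm X * specnorm W"
  unfolding Phi_def using relu_norm mm_spec order_trans by blast

lemma Zeq_norm:
  assumes "0 \<le> \<gamma>" "\<gamma> * specnorm A < 1"
  shows "(1 - \<gamma> * specnorm A) * norm (Zeq \<gamma> X W A) \<le> norm X * specnorm W"
proof -
  let ?Z = "Zeq \<gamma> X W A"
  have "norm ?Z \<le> norm (\<gamma> *\<^sub>R (?Z ** A) + Phi X W)"
    using Zeq_equil[OF assms] relu_norm by metis
  also have "\<dots> \<le> \<gamma> * norm (?Z ** A) + norm (Phi X W)"
    using norm_triangle_ineq assms(1) by (metis abs_of_nonneg norm_scaleR)
  also have "\<dots> \<le> \<gamma> * (norm ?Z * specnorm A) + norm X * specnorm W"
    by (intro add_mono mult_left_mono mm_spec Phi_norm assms(1))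
  finally show ?thesis by (simp add: algebra_simps)
qed

lemma Zeq_lip:
  assumes "0 \<le> \<gamma>" "\<gamma> * specnorm A < 1" "\<gamma> * specnorm A' < 1"
  shows "(1 - \<gamma> * specnorm A') * norm (Zeq \<gamma> X W A - Zeq \<gamma> X W' A')
     \<le> \<gamma> * norm (Zeq \<gamma> X W A) * specnorm (A - A') + norm X * specnorm (W - W')"
proof -
  let ?Z = "Zeq \<gamma> X W A" and ?Z' = "Zeq \<gamma> X W' A'"
  have "norm (?Z - ?Z') \<le> norm ((\<gamma> *\<^sub>R (?Z ** A) + Phi X W) - (\<gamma> *\<^sub>R (?Z' ** A') + Phi X W'))"
    using Zeq_equil[OF assms(1,2)] Zeq_equil[OF assms(1,3)] relu_lip by metis
  also have "(\<gamma> *\<^sub>R (?Z ** A) + Phi X W) - (\<gamma> *\<^sub>R (?Z' ** A') + Phi X W')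
     = \<gamma> *\<^sub>R ((?Z - ?Z') ** A') + \<gamma> *\<^sub>R (?Z ** (A - A')) + (Phi X W - Phi X W')"
    by (simp add: mat_sub_r mat_sub_l algebra_simps)
  also have "norm \<dots> \<le> \<gamma> * (norm (?Z - ?Z') * specnorm A') + \<gamma> * (norm ?Z * specnorm (A - A'))
      + norm X * specnorm (W - W')"
  proof -
    have "norm (Phi X W - Phi X W') \<le> norm (X ** W - X ** W')"
      unfolding Phi_def by (rule relu_lip)
    also have "\<dots> \<le> norm X * specnorm (W - W')"
      using mm_spec[of X "W - W'"] by (simp add: mat_sub_l)
    finally have p: "norm (Phi X W - Phi X W') \<le> norm X * specnorm (W - W')" .
    have a: "norm (\<gamma> *\<^sub>R ((?Z - ?Z') ** A')) \<le> \<gamma> * (norm (?Z - ?Z') * specnorm A')"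
      using assms(1) by (simp add: mult_left_mono mm_spec)
    have b: "norm (\<gamma> *\<^sub>R (?Z ** (A - A'))) \<le> \<gamma> * (norm ?Z * specnorm (A - A'))"
      using assms(1) by (simp add: mult_left_mono mm_spec)
    show ?thesis using a b p norm_triangle_ineq order_trans add_mono by (smt (verit))
  qed
  finally show ?thesis by (simp add: algebra_simps)
qed


definition eigs :: "real^'n^'n \<Rightarrow> real set" where
  "eigs S = {\<mu>. \<exists>v. v \<noteq> 0 \<and> S *v v = \<mu> *\<^sub>R v}"

lemma inner_sym:
  assumes "transpose S = S"
  shows "inner x (S *v y) = inner (S *v x) (y::real^'n)"
proof -
  have "inner x (S *v y) = inner (x v* S) y" by (rule dot_lmul_matrix[symmetric])
  also have "x v* S = transpose S *v x" by simp
  finally show ?thesis using assms by simp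
qed

lemma eigs_finite:
  assumes sym: "transpose S = S"
  shows "finite (eigs S)"
proof -
  define f where "f \<mu> = (SOME v. v \<noteq> 0 \<and> S *v v = \<mu> *\<^sub>R v)" for \<mu>
  have f: "f \<mu> \<noteq> 0 \<and> S *v f \<mu> = \<mu> *\<^sub>R f \<mu>" if "\<mu> \<in> eigs S" for \<mu>
  proof -
    from that obtain v where "v \<noteq> 0 \<and> S *v v = \<mu> *\<^sub>R v" unfolding eigs_def by auto
    thus ?thesis unfolding f_def by (rule someI)
  qed
  have inj: "inj_on f (eigs S)"
  proof (rule inj_onI)
    fix a b assume a: "a \<in> eigs S" and b: "b \<in> eigs S" and e: "f a = f b"
    have "a *\<^sub>R f a = b *\<^sub>R f a" using f[OF a] f[OF b] e by metis
    thus "a = b" using f[OF a] by simp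
  qed
  have "independent (f ` eigs S)"
  proof (rule pairwise_orthogonal_independent)
    show "0 \<notin> f ` eigs S" using f by auto
    show "pairwise orthogonal (f ` eigs S)"
    proof (clarsimp simp: pairwise_def orthogonal_def)
      fix a b assume a: "a \<in> eigs S" and b: "b \<in> eigs S" and ne: "f a \<noteq> f b"
      have "a \<noteq> b" using ne by auto
      have "b * inner (f a) (f b) = inner (f a) (S *v f b)" using f[OF b] by simp
      also have "\<dots> = inner (S *v f a) (f b)" by (rule inner_sym[OF sym])
      also have "\<dots> = a * inner (f a) (f b)" using f[OF a] by simp
      finally show "inner (f a) (f b) = 0" using \<open>a \<noteq> b\<close> by simp
    qed
  qed
  hence "finite (f ` eigs S)" by (rule finiteI_independent)
  thus ?thesis using inj finite_imageD by blast
qed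

lemma quad_zero:
  fixes a c :: real
  assumes "\<And>t. 0 \<le> 2 * t * a + t^2 * c"
  shows "a = 0"
proof (rule ccontr)
  assume "a \<noteq> 0"
  define k where "k = \<bar>c\<bar> + 1"
  have k: "k > 0" "c \<le> k - 1" unfolding k_def by auto
  have "0 \<le> 2 * (-a/k) * a + (-a/k)^2 * c" by (rule assms)
  hence "0 \<le> (2 * (-a/k) * a + (-a/k)^2 * c) * k^2" using k by simp
  also have "\<dots> = -2*a^2*k + a^2 * c" using k by (simp add: field_simps power2_eq_square)
  also have "\<dots> \<le> -2*a^2*k + a^2*(k-1)" using k by (simp add: mult_left_mono)
  also have "\<dots> < 0" using k \<open>a \<noteq> 0\<close> by (simp add: algebra_simps) (smt (verit) mult_pos_pos zero_less_power2)
  finally show False by simp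
qed

lemma rayleigh:
  assumes sym: "transpose S = S"
  shows "\<exists>v \<mu>. v \<noteq> 0 \<and> S *v v = \<mu> *\<^sub>R v \<and> (\<forall>x::real^'n. \<mu> * (norm x)^2 \<le> inner x (S *v x))"
proof -
  have "\<exists>v\<in>sphere (0::real^'n) 1. \<forall>y\<in>sphere 0 1. inner v (S *v v) \<le> inner y (S *v y)"
    by (rule continuous_attains_inf) (auto intro!: continuous_intros compact_sphere)
  then obtain v where v: "norm v = 1" and vmin: "\<And>y. norm y = 1 \<Longrightarrow> inner v (S *v v) \<le> inner y (S *v y)"
    by auto
  define \<mu> where "\<mu> = inner v (S *v v)"
  have gen: "\<mu> * (norm x)^2 \<le> inner x (S *v x)" for x :: "real^'n"
  proof (cases "x = 0")
    case True thus ?thesis by simp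
  next
    case False
    define y where "y = (1 / norm x) *\<^sub>R x"
    have "norm y = 1" unfolding y_def using False by simp
    hence "\<mu> \<le> inner y (S *v y)" using vmin \<mu>_def by simp
    also have "inner y (S *v y) = inner x (S *v x) / (norm x)^2"
      unfolding y_def by (simp add: matrix_vector_mult_scaleR power2_eq_square)
    finally show ?thesis using False by (simp add: field_simps)
  qed
  have eig: "S *v v = \<mu> *\<^sub>R v"
  proof -
    define w where "w = S *v v - \<mu> *\<^sub>R v"
    have vv: "inner v v = 1" using v by (simp add: power2_norm_eq_inner[symmetric])
    have wv: "inner w v = 0"
      unfolding w_def \<mu>_def using vv by (simp add: inner_diff_left inner_diff_right inner_commute)
    have wSv: "inner w (S *v v) = inner w w"
      unfolding w_def[of] using wv unfolding w_def by (simp add: inner_diff_right inner_diff_left)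
    have "0 \<le> 2 * t * inner w w + t^2 * (inner w (S *v w) - \<mu> * inner w w)" for t
    proof -
      have g: "0 \<le> inner (v + t *\<^sub>R w) (S *v (v + t *\<^sub>R w)) - \<mu> * (norm (v + t *\<^sub>R w))^2"
        using gen[of "v + t *\<^sub>R w"] by simp
      have e1: "inner (v + t *\<^sub>R w) (S *v (v + t *\<^sub>R w)) = \<mu> + 2 * t * inner w (S *v v) + t^2 * inner w (S *v w)"
        using inner_sym[OF sym, of v w] unfolding \<mu>_def
        by (simp add: matrix_vector_right_distrib matrix_vector_mult_scaleR inner_add_left inner_add_right power2_eq_square inner_commute algebra_simps)
      have e2: "(norm (v + t *\<^sub>R w))^2 = 1 + 2 * t * inner w v + t^2 * inner w w"
        unfolding power2_norm_eq_inner using vv by (simp add: inner_add_left inner_add_right inner_commute power2_eq_square algebra_simps)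
      show ?thesis using g unfolding e1 e2 wv wSv by (simp add: algebra_simps)
    qed
    hence "inner w w = 0" by (rule quad_zero)
    thus ?thesis unfolding w_def by simp
  qed
  show ?thesis using v eig gen by (intro exI[of _ v] exI[of _ \<mu>]) auto
qed

lemma lambda_min_props:
  fixes S :: "real^'n^'n"
  assumes sym: "transpose S = S"
  shows "lambda_min S \<in> eigs S" "\<And>x::real^'n. lambda_min S * (norm x)^2 \<le> inner x (S *v x)"
proof -
  obtain v \<mu> where v: "v \<noteq> 0" "S *v v = \<mu> *\<^sub>R v" and g: "\<And>x::real^'n. \<mu> * (norm x)^2 \<le> inner x (S *v x)"
    using rayleigh[OF sym] by blast
  have mu: "\<mu> \<in> eigs S" using v unfolding eigs_def by auto
  have lm: "lambda_min S = Min (eigs S)" unfolding lambda_min_def eigs_def by simp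
  show "lambda_min S \<in> eigs S" unfolding lm using eigs_finite[OF sym] mu by (intro Min_in) auto
  fix x :: "real^'n"
  have "lambda_min S \<le> \<mu>" unfolding lm using eigs_finite[OF sym] mu by simp
  hence "lambda_min S * (norm x)^2 \<le> \<mu> * (norm x)^2" by (simp add: mult_right_mono)
  also have "\<dots> \<le> inner x (S *v x)" by (rule g)
  finally show "lambda_min S * (norm x)^2 \<le> inner x (S *v x)" .
qed

lemma ZZt_quad: "inner x ((Z ** transpose Z) *v x) = (norm (transpose Z *v x))^2"
  for Z :: "real^'m^'n"
proof -
  have "inner x ((Z ** transpose Z) *v x) = inner x (Z *v (transpose Z *v x))"
    by (metis matrix_vector_mul_assoc)
  also have "\<dots> = inner (x v* Z) (transpose Z *v x)" by (rule dot_lmul_matrix[symmetric])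
  finally show ?thesis by (simp add: power2_norm_eq_inner)
qed

lemma ZZt_sym: "transpose (Z ** transpose Z) = Z ** transpose (Z::real^'m^'n)"
  by (simp add: matrix_transpose_mul)

lemma lambda_min_ZZt:
  fixes Z :: "real^'m^'n"
  shows "0 \<le> lambda_min (Z ** transpose Z)"
    "\<exists>v. v \<noteq> 0 \<and> lambda_min (Z ** transpose Z) * (norm v)^2 = (norm (transpose Z *v v))^2"
proof -
  let ?S = "Z ** transpose Z"
  have "lambda_min ?S \<in> eigs ?S" using lambda_min_props(1)[OF ZZt_sym] .
  then obtain v where v: "v \<noteq> 0" "?S *v v = lambda_min ?S *\<^sub>R v" unfolding eigs_def by auto
  have e: "lambda_min ?S * (norm v)^2 = (norm (transpose Z *v v))^2"
    using ZZt_quad[of v Z] v(2) by (simp add: power2_norm_eq_inner)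
  thus "\<exists>v. v \<noteq> 0 \<and> lambda_min ?S * (norm v)^2 = (norm (transpose Z *v v))^2" using v(1) by blast
  have p: "0 < (norm v)^2" using v(1) by simp
  have "0 \<le> lambda_min ?S * (norm v)^2" using e by simp
  thus "0 \<le> lambda_min ?S" using p by (simp add: zero_le_mult_iff)
qed

lemma sigma_min_nonneg: "0 \<le> sigma_min (Z::real^'m^'n)" unfolding sigma_min_def using lambda_min_ZZt(1) by simp

lemma sigma_min_lower: "sigma_min Z * norm x \<le> norm (transpose Z *v x)"
  for Z :: "real^'m^'n"
proof -
  let ?S = "Z ** transpose Z"
  have nn: "0 \<le> lambda_min ?S" by (rule lambda_min_ZZt(1))
  have "(sigma_min Z * norm x)^2 = lambda_min ?S * (norm x)^2"
    unfolding sigma_min_def using nn by (simp add: power_mult_distrib)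
  also have "\<dots> \<le> (norm (transpose Z *v x))^2"
    using lambda_min_props(2)[OF ZZt_sym[of Z], of x] ZZt_quad[of x Z] by simp
  finally show ?thesis by (simp add: power2_le_iff_abs_le)
qed

lemma sigma_min_attained: "\<exists>v. v \<noteq> 0 \<and> norm (transpose Z *v v) = sigma_min Z * norm v"
  for Z :: "real^'m^'n"
proof -
  let ?S = "Z ** transpose Z"
  obtain v where v: "v \<noteq> 0" and e: "lambda_min ?S * (norm v)^2 = (norm (transpose Z *v v))^2"
    using lambda_min_ZZt(2) by blast
  have "(norm (transpose Z *v v))^2 = (sigma_min Z * norm v)^2"
    unfolding sigma_min_def e[symmetric] using lambda_min_ZZt(1)[of Z] by (simp add: power_mult_distrib)
  hence "norm (transpose Z *v v) = sigma_min Z * norm v"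
    by (metis power2_eq_iff_nonneg norm_ge_zero sigma_min_nonneg mult_nonneg_nonneg)
  thus ?thesis using v by blast
qed


lemma sigma_min_le_norm: "sigma_min (Z::real^'m^'n) \<le> norm Z"
proof -
  obtain v where v: "v \<noteq> 0" "norm (transpose Z *v v) = sigma_min Z * norm v" using sigma_min_attained by blast
  have "sigma_min Z * norm v \<le> norm Z * norm v"
    using v(2) mv_bound[of "transpose Z" v] by (simp add: norm_transpose)
  thus ?thesis using v(1) by simp
qed

lemma sigma_min_perturb: "sigma_min (Z::real^'m^'n) - norm (Z - Z') \<le> sigma_min Z'"
proof -
  obtain v where v: "v \<noteq> 0" "norm (transpose Z' *v v) = sigma_min Z' * norm v" using sigma_min_attained by blast
  have "sigma_min Z * norm v \<le> norm (transpose Z *v v)" by (rule sigma_min_lower)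
  also have "transpose Z *v v = transpose Z' *v v + transpose (Z - Z') *v v"
    by (simp add: transpose_def matrix_vector_mult_def vec_eq_iff sum.distrib[symmetric] algebra_simps)
  also have "norm \<dots> \<le> sigma_min Z' * norm v + norm (Z - Z') * norm v"
    using norm_triangle_ineq v(2) mv_bound[of "transpose (Z - Z')" v] norm_transpose[of "Z - Z'"]
    by (smt (verit))
  finally have "(sigma_min Z - norm (Z - Z')) * norm v \<le> sigma_min Z' * norm v"
    by (simp add: algebra_simps)
  thus ?thesis using v(1) by (simp add: mult_right_le_imp_le)
qed


lemma kron_vec: "transpose (kron (P::real^'q^'p) (R::real^'s^'r)) *v vecm (Y::real^'p^'r)
   = vecm (transpose R ** Y ** P)"
proof -
  have "(transpose (kron P R) *v vecm Y) $ (j1, j2) = vecm (transpose R ** Y ** P) $ (j1, j2)" for j1 j2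
  proof -
    have "(transpose (kron P R) *v vecm Y) $ (j1, j2) = (\<Sum>i1\<in>UNIV. \<Sum>i2\<in>UNIV. P$i1$j1 * R$i2$j2 * Y$i2$i1)"
      by (simp add: matrix_vector_mult_def transpose_def kron_def vecm_def sum_pair_UNIV)
    also have "\<dots> = (\<Sum>i1\<in>UNIV. \<Sum>i2\<in>UNIV. R$i2$j2 * Y$i2$i1 * P$i1$j1)"
      by (simp add: mult_ac)
    also have "\<dots> = vecm (transpose R ** Y ** P) $ (j1, j2)"
      by (simp add: vecm_def matrix_matrix_mult_def transpose_def sum_distrib_right)
    finally show ?thesis .
  qed
  thus ?thesis by (simp add: vec_eq_iff)
qed

lemma diag_bound:
  assumes "\<And>i. \<bar>v $ i\<bar> \<le> 1"
  shows "norm (diagm v *v (x::real^'n)) \<le> norm x"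
proof (rule norm_le_componentwise_cart)
  fix i
  have "(diagm v *v x) $ i = v $ i * x $ i"
    by (simp add: diagm_def matrix_vector_mult_def if_distrib[of "\<lambda>a. a * _"] cong: if_cong)
  thus "norm ((diagm v *v x) $ i) \<le> norm (x $ i)"
    using assms[of i] by (simp add: abs_mult mult_left_le_one_le)
qed

lemma relu'_bound: "\<bar>vecm (relu' M) $ i\<bar> \<le> 1"
  by (simp add: vecm_def relu'_def)

lemma diagm_transpose: "transpose (diagm v) = diagm v"
  by (simp add: vec_eq_iff transpose_def diagm_def)

lemma unvec: "\<exists>Y. x = vecm (Y::real^'p^'r)"
  by (rule exI[of _ "\<chi> r c. x $ (c, r)"]) (simp add: vecm_def vec_eq_iff)

lemma norm_colmat: "norm (colmat v) = norm v"
proof -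
  have "(norm (colmat v))^2 = (norm v)^2"
    unfolding norm_sq_mat norm_sq_real by (simp add: colmat_def)
  thus ?thesis by (simp add: power2_eq_iff_nonneg)
qed

lemma matrix_inv_works:
  assumes "invertible (M::real^'n^'n)"
  shows "M ** matrix_inv M = mat 1"
  using assms unfolding invertible_def matrix_inv_def by (rule someI_ex[THEN conjunct1])


lemma transpose_diff: "transpose ((M::real^'n^'m) - N) = transpose M - transpose N"
  by (simp add: vec_eq_iff transpose_def)

lemma Dm_bound: "norm (Dm \<gamma> X W A *v x) \<le> norm x"
  unfolding Dm_def by (rule diag_bound[OF relu'_bound])

lemma Em_bound: "norm (Em X W *v x) \<le> norm x"
  unfolding Em_def by (rule diag_bound[OF relu'_bound])

lemma QT_bound:
  fixes X :: "real^'d^'N" and W :: "real^'m^'d" and A :: "real^'m^'m"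
  assumes g: "0 \<le> \<gamma>"
  shows "(1 - \<gamma> * specnorm A) * norm x \<le> norm (transpose (Qm \<gamma> X W A) *v x)"
proof -
  let ?D = "Dm \<gamma> X W A" and ?K = "kron (transpose A) (mat 1 :: real^'N^'N)"
  have dt: "transpose ?D = ?D" by (simp add: Dm_def diagm_transpose)
  have tq: "transpose (Qm \<gamma> X W A) *v x = x - \<gamma> *\<^sub>R (transpose ?K *v (?D *v x))"
    unfolding Qm_def transpose_diff transpose_scalar matrix_transpose_mul transpose_mat dt
    by (simp only: matrix_vector_mult_diff_rdistrib matrix_vector_mul_lid scaleR_matrix_vector_assoc[symmetric]
         matrix_vector_mul_assoc[symmetric])
  obtain Y :: "real^'m^'N" where Y: "?D *v x = vecm Y" using unvec by blast
  have "transpose ?K *v (?D *v x) = vecm (Y ** transpose A)"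
    unfolding Y kron_vec by (simp only: transpose_mat matrix_mul_lid)
  hence "norm (transpose ?K *v (?D *v x)) \<le> norm Y * specnorm A"
    by (simp add: norm_vecm mm_spec[of Y "transpose A", unfolded specnorm_transpose])
  also have "norm Y = norm (?D *v x)" by (simp add: Y norm_vecm)
  also have "\<dots> \<le> norm x" by (rule Dm_bound)
  finally have k: "norm (transpose ?K *v (?D *v x)) \<le> norm x * specnorm A"
    using specnorm_nonneg[of A] by (simp add: mult_right_mono)
  have "norm x \<le> norm (transpose (Qm \<gamma> X W A) *v x) + norm (\<gamma> *\<^sub>R (transpose ?K *v (?D *v x)))"
    unfolding tq using norm_triangle_sub[of x "\<gamma> *\<^sub>R (transpose ?K *v (?D *v x))"]
    by linarith
  also have "norm (\<gamma> *\<^sub>R (transpose ?K *v (?D *v x))) \<le> \<gamma> * (norm x * specnorm A)"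
    using g k by (simp add: mult_left_mono)
  finally show ?thesis by (simp add: algebra_simps)
qed

lemma backprop_bound:
  fixes X :: "real^'d^'N" and W :: "real^'m^'d" and A :: "real^'m^'m"
  assumes g: "0 \<le> \<gamma>" and s: "\<gamma> * specnorm A < 1"
  shows "(1 - \<gamma> * specnorm A) * norm (backprop \<gamma> X y W A b) \<le> norm b * norm (yhat \<gamma> X W A b - y)"
proof -
  let ?QT = "transpose (Qm \<gamma> X W A)"
  have inj: "inj ((*v) ?QT)"
  proof (rule injI)
    fix x1 x2 assume e: "?QT *v x1 = ?QT *v x2"
    have "(1 - \<gamma> * specnorm A) * norm (x1 - x2) \<le> norm (?QT *v (x1 - x2))" by (rule QT_bound[OF g])
    also have "?QT *v (x1 - x2) = 0" using e by (simp add: matrix_vector_mult_diff_distrib)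
    finally show "x1 = x2" using s by (simp add: mult_le_0_iff)
  qed
  hence "invertible ?QT" using matrix_left_invertible_injective invertible_left_inverse by blast
  hence inv: "?QT ** matrix_inv ?QT = mat 1" by (rule matrix_inv_works)
  let ?u = "transpose (kron (transpose (colmat b)) (mat 1 :: real^'N^'N)) *v vecm (colmat (yhat \<gamma> X W A b - y))"
  have bp: "backprop \<gamma> X y W A b = matrix_inv ?QT *v ?u" unfolding backprop_def by (rule refl)
  have qi: "?QT *v (matrix_inv ?QT *v z) = z" for z
    by (simp only: matrix_vector_mul_assoc inv matrix_vector_mul_lid)
  have qb: "?QT *v backprop \<gamma> X y W A b = ?u"
    unfolding bp by (rule qi)
  moreover have "norm ?u \<le> norm b * norm (yhat \<gamma> X W A b - y)"
  proof -
    have "?u = vecm (colmat (yhat \<gamma> X W A b - y) ** transpose (colmat b))"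
      unfolding kron_vec by (simp only: transpose_mat matrix_mul_lid)
    hence "norm ?u = norm (colmat (yhat \<gamma> X W A b - y) ** transpose (colmat b))" by (simp add: norm_vecm)
    also have "\<dots> \<le> norm (colmat (yhat \<gamma> X W A b - y)) * norm (transpose (colmat b))" by (rule mm_frob)
    finally show ?thesis by (simp add: norm_colmat norm_transpose mult.commute)
  qed
  moreover have "(1 - \<gamma> * specnorm A) * norm (backprop \<gamma> X y W A b) \<le> norm (?QT *v backprop \<gamma> X y W A b)"
    by (rule QT_bound[OF g])
  ultimately show ?thesis unfolding qb by linarith
qed

lemma gradW_bound:
  fixes X :: "real^'d^'N" and W :: "real^'m^'d" and A :: "real^'m^'m"
  shows "norm (gradW \<gamma> X y W A b) \<le> norm X * norm (backprop \<gamma> X y W A b)"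
proof -
  let ?bp = "backprop \<gamma> X y W A b"
  obtain Y :: "real^'m^'N" where Y: "Em X W *v (Dm \<gamma> X W A *v ?bp) = vecm Y" using unvec by blast
  have "gradW \<gamma> X y W A b = transpose (kron (mat 1 :: real^'m^'m) X) *v (Em X W *v (Dm \<gamma> X W A *v ?bp))"
  proof -
    have "transpose (Dm \<gamma> X W A) = Dm \<gamma> X W A" "transpose (Em X W) = Em X W" by (simp_all add: Dm_def Em_def diagm_transpose)
    thus ?thesis unfolding gradW_def matrix_transpose_mul by (simp only: matrix_vector_mul_assoc)
  qed
  also have "\<dots> = vecm (transpose X ** Y)" unfolding Y kron_vec by (simp only: matrix_mul_rid)
  finally have "norm (gradW \<gamma> X y W A b) = norm (transpose X ** Y)" by (simp add: norm_vecm)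
  also have "\<dots> \<le> norm X * norm Y" using mm_frob[of "transpose X" Y] by (simp add: norm_transpose)
  also have "norm Y \<le> norm ?bp"
  proof -
    have "norm Y = norm (Em X W *v (Dm \<gamma> X W A *v ?bp))" using Y norm_vecm by metis
    also have "\<dots> \<le> norm (Dm \<gamma> X W A *v ?bp)" by (rule Em_bound)
    also have "\<dots> \<le> norm ?bp" by (rule Dm_bound)
    finally show ?thesis .
  qed
  finally show ?thesis by (simp add: mult_left_mono)
qed

lemma gradA_bound:
  fixes X :: "real^'d^'N" and W :: "real^'m^'d" and A :: "real^'m^'m"
  assumes g: "0 \<le> \<gamma>"
  shows "norm (gradA \<gamma> X y W A b) \<le> \<gamma> * norm (Zeq \<gamma> X W A) * norm (backprop \<gamma> X y W A b)"
proof -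
  let ?bp = "backprop \<gamma> X y W A b" and ?Z = "Zeq \<gamma> X W A"
  obtain Y :: "real^'m^'N" where Y: "Dm \<gamma> X W A *v ?bp = vecm Y" using unvec by blast
  have "gradA \<gamma> X y W A b = \<gamma> *\<^sub>R (transpose (kron (mat 1 :: real^'m^'m) ?Z) *v (Dm \<gamma> X W A *v ?bp))"
  proof -
    have "transpose (Dm \<gamma> X W A) = Dm \<gamma> X W A" by (simp_all add: Dm_def diagm_transpose)
    thus ?thesis unfolding gradA_def matrix_transpose_mul by (simp only: matrix_vector_mul_assoc)
  qed
  also have "\<dots> = \<gamma> *\<^sub>R vecm (transpose ?Z ** Y)" unfolding Y kron_vec by (simp only: matrix_mul_rid)
  finally have "norm (gradA \<gamma> X y W A b) = \<gamma> * norm (transpose ?Z ** Y)" using g by (simp add: norm_vecm)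
  also have "\<dots> \<le> \<gamma> * (norm ?Z * norm Y)"
    using mm_frob[of "transpose ?Z" Y] g by (simp add: norm_transpose mult_left_mono)
  also have "norm Y \<le> norm ?bp"
  proof -
    have "norm Y = norm (Dm \<gamma> X W A *v ?bp)" using Y norm_vecm by metis
    also have "\<dots> \<le> norm ?bp" by (rule Dm_bound)
    finally show ?thesis .
  qed
  finally show ?thesis using g by (simp add: mult_left_mono mult.assoc)
qed

lemma gradb_bound:
  "norm (gradb \<gamma> X y W A b) \<le> norm (Zeq \<gamma> X W A) * norm (yhat \<gamma> X W A b - y)"
  unfolding gradb_def using mv_bound[of "transpose (Zeq \<gamma> X W A)"] by (simp add: norm_transpose)


lemma sqrt_step:
  fixes t :: real assumes "0 \<le> t" "t \<le> 2"
  shows "sqrt (1 - 3*t/8) + t/16 \<le> sqrt (1 - t/4)"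
proof -
  have s1: "sqrt (1 - 3*t/8) \<le> 1 - 3*t/16"
    using assms by (intro real_le_lsqrt) (auto simp: power2_eq_square algebra_simps)
  have "(sqrt (1 - 3*t/8) + t/16)^2 = (1 - 3*t/8) + t/8 * sqrt (1 - 3*t/8) + t^2/256"
    using assms by (simp add: power2_eq_square algebra_simps)
  also have "\<dots> \<le> (1 - 3*t/8) + t/8 * (1 - 3*t/16) + t^2/256"
    using s1 assms by (simp add: mult_left_mono)
  also have "\<dots> \<le> 1 - t/4" using assms by (simp add: power2_eq_square algebra_simps)
  finally show ?thesis using assms by (intro real_le_rsqrt) auto
qed

locale gdset =
  fixes X :: "real^'d^'N" and y :: "real^'N" and W :: "nat \<Rightarrow> real^'m^'d"
    and A :: "nat \<Rightarrow> real^'m^'m" and b :: "nat \<Rightarrow> real^'m"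
    and \<gamma> \<eta> C1 C2 C3 :: real
    and \<alpha>0 l1 l2 l3 g0 l0 \<kappa> r0 lb fx t \<rho> :: real
  assumes C_pos: "C1 > 0" "C2 > 0" "C3 > 0"
    and GDW: "\<And>k. vecm (W (Suc k)) = vecm (W k) - \<eta> *\<^sub>R gradW \<gamma> X y (W k) (A k) (b k)"
    and GDA: "\<And>k. vecm (A (Suc k)) = vecm (A k) - \<eta> *\<^sub>R gradA \<gamma> X y (W k) (A k) (b k)"
    and GDb: "\<And>k. b (Suc k) = b k - \<eta> *\<^sub>R gradb \<gamma> X y (W k) (A k) (b k)"
    and gpos: "\<gamma> > 0"
    and a0: "\<alpha>0 = sigma_min (Zeq \<gamma> X (W 0) (A 0))"
    and l1: "l1 = specnorm (W 0) + C1" and l2: "l2 = specnorm (A 0) + C2" and l3: "l3 = norm (b 0) + C3"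
    and g0: "g0 = \<gamma> * l2" and g0lt: "g0 < 1"
    and l0: "l0 = Max {l1 / C3, g0 * l1 * l3 / ((1 - g0) * C2 * l2), l3 / C1}"
    and kap: "\<kappa> = 1 + g0^2 / (1 - g0)^2 * (l1^2 / l2^2)"
    and r0: "r0 = norm (yhat \<gamma> X (W 0) (A 0) (b 0) - y)"
    and lb: "lb = \<kappa> * inverse ((\<kappa> * inverse (l1^2) + inverse (l3^2))^2)"
    and fx: "fx = norm X"
    and h1: "\<alpha>0^2 \<ge> 8 / (1 - g0) * l0 * fx * r0"
    and h2: "\<alpha>0^3 \<ge> \<kappa> * (16 * l3 / (1 - g0)^2) * fx^2 * r0"
    and h3: "\<alpha>0^2 \<ge> \<kappa> * (16 * l3^2 / (1 - g0)^2) * fx^2"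
    and h4: "0 < \<eta>"
    and h6: "\<eta> * (l1^4 * l3^2 * fx^2) < 2 * (1 - g0)^2 * lb"
    and t: "t = \<eta> * \<alpha>0^2" and rho: "\<rho> = sqrt (1 - t/4)"
begin

lemma l1pos: "l1 > 0" using l1 C_pos specnorm_nonneg[of "W 0"] by simp
lemma l2pos: "l2 > 0" using l2 C_pos specnorm_nonneg[of "A 0"] by simp
lemma l3pos: "l3 > 0" using l3 C_pos norm_ge_zero[of "b 0"] by linarith
lemma g0pos: "g0 > 0" using g0 gpos l2pos by simp
lemma omg: "1 - g0 > 0" using g0lt by simp
lemma fxnn: "fx \<ge> 0" using fx by simp
lemma r0nn: "r0 \<ge> 0" using r0 by simp
lemma a0nn: "\<alpha>0 \<ge> 0" using a0 sigma_min_nonneg by simp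
lemma kap1: "\<kappa> \<ge> 1" using kap l1pos l2pos omg by simp
lemma gam: "\<gamma> = g0 / l2" using g0 l2pos by simp

lemma l0_ge: "l1 / C3 \<le> l0" "g0 * l1 * l3 / ((1 - g0) * C2 * l2) \<le> l0" "l3 / C1 \<le> l0"
  unfolding l0 by auto

lemma lb_bound: "4 * lb \<le> l1^2 * l3^2"
proof -
  define a where "a = \<kappa> * l3 / l1"
  define c where "c = l1 / l3"
  define s where "s = \<kappa> * inverse (l1^2) + inverse (l3^2)"
  have sp: "s > 0" unfolding s_def using kap1 l1pos l3pos by (simp add: add_pos_pos)
  have ac: "a * c = \<kappa>" unfolding a_def c_def using l1pos l3pos by simp
  have e: "(a + c)^2 - 4 * (a * c) = (a - c)^2" by (simp add: power2_eq_square algebra_simps)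
  have "4 * (a * c) \<le> (a + c)^2" using e zero_le_power2[of "a - c"] by linarith
  moreover have "s * (l1 * l3) = a + c"
    unfolding a_def c_def s_def using l1pos l3pos by (simp add: field_simps power2_eq_square)
  ultimately have "4 * \<kappa> \<le> (s * (l1 * l3))^2" using ac by simp
  hence "4 * \<kappa> \<le> (l1^2 * l3^2) * s^2" by (simp add: power_mult_distrib mult_ac)
  hence "4 * \<kappa> / s^2 \<le> l1^2 * l3^2" using sp by (simp add: pos_divide_le_eq)
  moreover have "4 * lb = 4 * \<kappa> / s^2" unfolding lb s_def by (simp add: field_simps)
  ultimately show ?thesis by simp
qed

lemma eta_small: "\<eta> * (l1^2 * fx^2) \<le> (1 - g0)^2 / 2"
proof -
  have "\<eta> * (l1^2 * fx^2) * (l1^2 * l3^2) = \<eta> * (l1^4 * l3^2 * fx^2)" by (simp add: algebra_simps power2_eq_square power4_eq_xxxx)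
  also have "\<dots> < 2 * (1 - g0)^2 * lb" by (rule h6)
  also have "\<dots> \<le> 2 * (1 - g0)^2 * (l1^2 * l3^2 / 4)" using lb_bound by (intro mult_left_mono) auto
  also have "\<dots> = (1 - g0)^2 / 2 * (l1^2 * l3^2)" by simp
  finally have "\<eta> * (l1^2 * fx^2) * (l1^2 * l3^2) < (1 - g0)^2 / 2 * (l1^2 * l3^2)" .
  hence "\<eta> * (l1^2 * fx^2) < (1 - g0)^2 / 2" by (rule mult_right_less_imp_less) simp
  thus ?thesis by simp
qed

end

context gdset begin

abbreviation "Z k \<equiv> Zeq \<gamma> X (W k) (A k)"
abbreviation "R k \<equiv> norm (yhat \<gamma> X (W k) (A k) (b k) - y)"
abbreviation "inball k \<equiv> specnorm (W k) \<le> l1 \<and> specnorm (A k) \<le> l2 \<and> norm (b k) \<le> l3"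
abbreviation "cW \<equiv> fx * l3 / (1 - g0)"
abbreviation "cA \<equiv> \<gamma> * l1 * fx * l3 / (1 - g0)^2"
abbreviation "cb \<equiv> l1 * fx / (1 - g0)"

lemma gs: "inball k \<Longrightarrow> \<gamma> * specnorm (A k) \<le> g0"
  using gpos g0 by (simp add: mult_left_mono)

lemma gs1: "inball k \<Longrightarrow> \<gamma> * specnorm (A k) < 1"
  using gs g0lt by fastforce

lemma Z_bound: assumes "inball k" shows "norm (Z k) \<le> fx * l1 / (1 - g0)"
proof -
  have "(1 - \<gamma> * specnorm (A k)) * norm (Z k) \<le> norm X * specnorm (W k)"
    by (rule Zeq_norm) (use gpos gs1[OF assms] in auto)
  also have "\<dots> \<le> fx * l1" using assms fx by (simp add: mult_left_mono)
  finally have a: "(1 - \<gamma> * specnorm (A k)) * norm (Z k) \<le> fx * l1" .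
  have "(1 - g0) * norm (Z k) \<le> (1 - \<gamma> * specnorm (A k)) * norm (Z k)"
    using gs[OF assms] by (simp add: mult_right_mono)
  with a have "(1 - g0) * norm (Z k) \<le> fx * l1" by simp
  thus ?thesis using omg by (simp add: field_simps)
qed

lemma bp_bound: assumes "inball k"
  shows "norm (backprop \<gamma> X y (W k) (A k) (b k)) \<le> l3 / (1 - g0) * R k"
proof -
  let ?bp = "backprop \<gamma> X y (W k) (A k) (b k)"
  have "(1 - \<gamma> * specnorm (A k)) * norm ?bp \<le> norm (b k) * R k"
    by (rule backprop_bound) (use gpos gs1[OF assms] in auto)
  also have "\<dots> \<le> l3 * R k" using assms by (simp add: mult_right_mono)
  finally have a: "(1 - \<gamma> * specnorm (A k)) * norm ?bp \<le> l3 * R k" .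
  have "(1 - g0) * norm ?bp \<le> (1 - \<gamma> * specnorm (A k)) * norm ?bp"
    using gs[OF assms] by (simp add: mult_right_mono)
  with a have "(1 - g0) * norm ?bp \<le> l3 * R k" by simp
  thus ?thesis using omg by (simp add: field_simps)
qed

lemma gW_bound: assumes "inball k"
  shows "norm (gradW \<gamma> X y (W k) (A k) (b k)) \<le> cW * R k"
proof -
  have "norm (gradW \<gamma> X y (W k) (A k) (b k)) \<le> fx * norm (backprop \<gamma> X y (W k) (A k) (b k))"
    using gradW_bound fx by metis
  also have "\<dots> \<le> fx * (l3 / (1 - g0) * R k)" using bp_bound[OF assms] fxnn by (rule mult_left_mono)
  finally show ?thesis by simp
qed

lemma gA_bound: assumes "inball k"
  shows "norm (gradA \<gamma> X y (W k) (A k) (b k)) \<le> cA * R k"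
proof -
  have "norm (gradA \<gamma> X y (W k) (A k) (b k)) \<le> \<gamma> * norm (Z k) * norm (backprop \<gamma> X y (W k) (A k) (b k))"
    by (rule gradA_bound) (use gpos in simp)
  also have "\<dots> \<le> \<gamma> * (fx * l1 / (1 - g0)) * (l3 / (1 - g0) * R k)"
  proof -
    have n1: "0 \<le> fx * l1 / (1 - g0)" using fxnn l1pos omg by simp
    have "norm (Z k) * norm (backprop \<gamma> X y (W k) (A k) (b k)) \<le> (fx * l1 / (1 - g0)) * (l3 / (1 - g0) * R k)"
      by (rule mult_mono[OF Z_bound[OF assms] bp_bound[OF assms] n1 norm_ge_zero])
    hence "\<gamma> * (norm (Z k) * norm (backprop \<gamma> X y (W k) (A k) (b k))) \<le> \<gamma> * ((fx * l1 / (1 - g0)) * (l3 / (1 - g0) * R k))"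
      by (rule mult_left_mono) (use gpos in simp)
    thus ?thesis by (simp only: mult.assoc)
  qed
  also have "\<dots> = cA * R k" by (simp add: power2_eq_square)
  finally show ?thesis .
qed

lemma gb_bound: assumes "inball k"
  shows "norm (gradb \<gamma> X y (W k) (A k) (b k)) \<le> cb * R k"
proof -
  have "norm (gradb \<gamma> X y (W k) (A k) (b k)) \<le> norm (Z k) * R k" by (rule gradb_bound)
  also have "\<dots> \<le> (fx * l1 / (1 - g0)) * R k" by (rule mult_right_mono[OF Z_bound[OF assms]]) simp
  also have "\<dots> = cb * R k" by (simp add: mult.commute)
  finally show ?thesis .
qed

lemma stepW: "norm (W (Suc k) - W k) = \<eta> * norm (gradW \<gamma> X y (W k) (A k) (b k))"
proof -
  have "norm (W (Suc k) - W k) = norm (vecm (W (Suc k)) - vecm (W k))" by (simp add: norm_vecm[symmetric] vecm_diff)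
  also have "\<dots> = \<eta> * norm (gradW \<gamma> X y (W k) (A k) (b k))" using GDW[of k] h4 by simp
  finally show ?thesis .
qed

lemma stepA: "norm (A (Suc k) - A k) = \<eta> * norm (gradA \<gamma> X y (W k) (A k) (b k))"
proof -
  have "norm (A (Suc k) - A k) = norm (vecm (A (Suc k)) - vecm (A k))" by (simp add: norm_vecm[symmetric] vecm_diff)
  also have "\<dots> = \<eta> * norm (gradA \<gamma> X y (W k) (A k) (b k))" using GDA[of k] h4 by simp
  finally show ?thesis .
qed

lemma stepb: "norm (b (Suc k) - b k) = \<eta> * norm (gradb \<gamma> X y (W k) (A k) (b k))"
  using GDb[of k] h4 by simp

lemma cnn: "cW \<ge> 0" "cA \<ge> 0" "cb \<ge> 0"
  using fxnn l1pos l3pos omg gpos by auto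

lemma cconst_aux: assumes "q \<le> C * l0" "C > 0"
  shows "q * fx * r0 / (1 - g0) \<le> C * \<alpha>0^2 / 8"
proof -
  have "q * fx * r0 / (1 - g0) \<le> C * l0 * fx * r0 / (1 - g0)"
    using assms fxnn r0nn omg by (intro divide_right_mono mult_right_mono) auto
  also have "\<dots> = C / 8 * (8 / (1 - g0) * l0 * fx * r0)" by simp
  also have "\<dots> \<le> C / 8 * \<alpha>0^2" using h1 assms(2) by (intro mult_left_mono) auto
  finally show ?thesis by simp
qed

lemma cb_r0: "cb * r0 \<le> C3 * \<alpha>0^2 / 8"
  using cconst_aux[of l1 C3] l0_ge(1) C_pos by (simp add: pos_divide_le_eq mult.commute)

lemma cW_r0: "cW * r0 \<le> C1 * \<alpha>0^2 / 8"
  using cconst_aux[of l3 C1] l0_ge(3) C_pos by (simp add: pos_divide_le_eq mult_ac)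

lemma cA_r0: "cA * r0 \<le> C2 * \<alpha>0^2 / 8"
proof -
  have q: "\<gamma> * l1 * l3 / (1 - g0) \<le> C2 * l0"
  proof -
    have "\<gamma> * l1 * l3 / (1 - g0) = C2 * (g0 * l1 * l3 / ((1 - g0) * C2 * l2))"
      unfolding gam using C_pos l2pos omg by (simp add: field_simps)
    also have "\<dots> \<le> C2 * l0" using l0_ge(2) C_pos by (intro mult_left_mono) auto
    finally show ?thesis .
  qed
  have "cA * r0 = \<gamma> * l1 * l3 / (1 - g0) * fx * r0 / (1 - g0)"
    using omg by (simp add: power2_eq_square field_simps)
  also have "\<dots> \<le> C2 * \<alpha>0^2 / 8" by (rule cconst_aux[OF q C_pos(2)])
  finally show ?thesis .
qed

lemma lipc: "\<gamma> * (fx * l1 / (1 - g0)) * cA + fx * cW = \<kappa> * fx^2 * l3 / (1 - g0)"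
proof -
  have nz: "1 - g0 \<noteq> 0" "l2 \<noteq> 0" using l2pos omg by auto
  obtain u where u: "1 - g0 = u" by blast
  have un: "u \<noteq> 0" using nz u by simp
  show ?thesis unfolding kap gam u using un nz(2) by (simp add: field_simps power2_eq_square)
qed

end

context gdset begin

lemma inball0: "inball 0"
  using l1 l2 l3 C_pos by simp

lemma t_nn: "0 \<le> t" using t h4 by simp

lemma t_small: "t \<le> 1/2"
proof -
  have "\<alpha>0 \<le> norm (Z 0)" using a0 sigma_min_le_norm by simp
  also have "\<dots> \<le> fx * l1 / (1 - g0)" by (rule Z_bound[OF inball0])
  finally have "\<alpha>0^2 \<le> (fx * l1 / (1 - g0))^2" using a0nn by (rule power_mono)
  hence "t \<le> \<eta> * (fx * l1 / (1 - g0))^2" unfolding t using h4 by (simp add: mult_left_mono)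
  also have "\<dots> = \<eta> * (l1^2 * fx^2) / (1 - g0)^2" by (simp add: power_divide power_mult_distrib mult_ac)
  also have "\<dots> \<le> ((1 - g0)^2 / 2) / (1 - g0)^2" using eta_small omg by (intro divide_right_mono) auto
  also have "\<dots> = 1/2" using omg by simp
  finally show ?thesis .
qed

lemma rho_nn: "0 \<le> \<rho>" using rho t_small by simp
lemma rho_sq: "\<rho>^2 = 1 - t/4" using rho t_small by simp
lemma rho_t: "t \<le> 8 * (1 - \<rho>)"
proof -
  have "\<rho> \<le> sqrt ((1 - t/8)^2)" unfolding rho using t_nn
    by (intro real_sqrt_le_mono) (simp add: power2_eq_square algebra_simps)
  also have "\<dots> = 1 - t/8" using t_small by simp
  finally show ?thesis by simp
qed

lemma geo: "\<alpha>0^2 * (\<Sum>j<n. \<eta> * \<rho>^j) \<le> 8"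
proof -
  have s: "0 \<le> (\<Sum>j<n. \<rho>^j)" using rho_nn by (simp add: sum_nonneg)
  have "\<alpha>0^2 * (\<Sum>j<n. \<eta> * \<rho>^j) = t * (\<Sum>j<n. \<rho>^j)" unfolding t by (simp add: sum_distrib_left sum_distrib_right mult_ac)
  also have "\<dots> \<le> 8 * (1 - \<rho>) * (\<Sum>j<n. \<rho>^j)" using rho_t s by (rule mult_right_mono)
  also have "\<dots> = 8 * (1 - \<rho>^n)" by (simp add: one_diff_power_eq)
  also have "\<dots> \<le> 8" using rho_nn by simp
  finally show ?thesis .
qed

lemma S_nn: "0 \<le> (\<Sum>j<n. \<eta> * \<rho>^j)" using rho_nn h4 by (simp add: sum_nonneg)

lemma tri_step: "norm (V (Suc n) - V 0) \<le> norm (V (Suc n) - V n) + norm (V n - (V 0 :: 'a::real_normed_vector))"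
proof -
  have "V (Suc n) - V 0 = (V (Suc n) - V n) + (V n - V 0)" by simp
  thus ?thesis by (metis norm_triangle_ineq)
qed

lemma disp:
  assumes "\<forall>j<n. inball j \<and> R j \<le> \<rho>^j * r0"
  shows "norm (W n - W 0) \<le> cW * r0 * (\<Sum>j<n. \<eta> * \<rho>^j)
       \<and> norm (A n - A 0) \<le> cA * r0 * (\<Sum>j<n. \<eta> * \<rho>^j)
       \<and> norm (b n - b 0) \<le> cb * r0 * (\<Sum>j<n. \<eta> * \<rho>^j)"
  using assms
proof (induction n)
  case 0 thus ?case by simp
next
  case (Suc n)
  hence IH: "norm (W n - W 0) \<le> cW * r0 * (\<Sum>j<n. \<eta> * \<rho>^j)"
      "norm (A n - A 0) \<le> cA * r0 * (\<Sum>j<n. \<eta> * \<rho>^j)"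
      "norm (b n - b 0) \<le> cb * r0 * (\<Sum>j<n. \<eta> * \<rho>^j)" by auto
  have bn: "inball n" and Rn: "R n \<le> \<rho>^n * r0" using Suc.prems by auto
  have ss: "cc * r0 * (\<Sum>j<Suc n. \<eta> * \<rho>^j) = cc * r0 * (\<Sum>j<n. \<eta> * \<rho>^j) + \<eta> * (cc * (\<rho>^n * r0))" for cc
    by (simp add: algebra_simps)
  have st: "\<eta> * nn \<le> \<eta> * (cc * (\<rho>^n * r0))" if "nn \<le> cc * R n" "0 \<le> cc" for nn cc
  proof -
    have "nn \<le> cc * (\<rho>^n * r0)" using that Rn by (meson mult_left_mono order_trans)
    thus ?thesis using h4 by (simp add: mult_left_mono)
  qed
  have "norm (W (Suc n) - W 0) \<le> norm (W (Suc n) - W n) + norm (W n - W 0)" by (rule tri_step)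
  also have "\<dots> \<le> \<eta> * (cW * (\<rho>^n * r0)) + cW * r0 * (\<Sum>j<n. \<eta> * \<rho>^j)"
    unfolding stepW using st[OF gW_bound[OF bn] cnn(1)] IH(1) by linarith
  finally have w: "norm (W (Suc n) - W 0) \<le> cW * r0 * (\<Sum>j<Suc n. \<eta> * \<rho>^j)" unfolding ss by linarith
  have "norm (A (Suc n) - A 0) \<le> norm (A (Suc n) - A n) + norm (A n - A 0)" by (rule tri_step)
  also have "\<dots> \<le> \<eta> * (cA * (\<rho>^n * r0)) + cA * r0 * (\<Sum>j<n. \<eta> * \<rho>^j)"
    unfolding stepA using st[OF gA_bound[OF bn] cnn(2)] IH(2) by linarith
  finally have a: "norm (A (Suc n) - A 0) \<le> cA * r0 * (\<Sum>j<Suc n. \<eta> * \<rho>^j)" unfolding ss by linarith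
  have "norm (b (Suc n) - b 0) \<le> norm (b (Suc n) - b n) + norm (b n - b 0)" by (rule tri_step)
  also have "\<dots> \<le> \<eta> * (cb * (\<rho>^n * r0)) + cb * r0 * (\<Sum>j<n. \<eta> * \<rho>^j)"
    unfolding stepb using st[OF gb_bound[OF bn] cnn(3)] IH(3) by linarith
  finally have bb: "norm (b (Suc n) - b 0) \<le> cb * r0 * (\<Sum>j<Suc n. \<eta> * \<rho>^j)" unfolding ss by linarith
  show ?case using w a bb by blast
qed

lemma ball_next:
  assumes "\<forall>j<n. inball j \<and> R j \<le> \<rho>^j * r0"
  shows "inball n"
proof -
  let ?S = "\<Sum>j<n. \<eta> * \<rho>^j"
  have d: "norm (W n - W 0) \<le> cW * r0 * ?S" "norm (A n - A 0) \<le> cA * r0 * ?S" "norm (b n - b 0) \<le> cb * r0 * ?S"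
    using disp[OF assms] by auto
  have g: "\<alpha>0^2 * ?S \<le> 8" by (rule geo)
  have C: "norm D \<le> C" if "norm D \<le> cc * r0 * ?S" "cc * r0 \<le> C * \<alpha>0^2 / 8" "C > 0" for D :: "'a::real_normed_vector" and cc C
  proof -
    have "norm D \<le> C * \<alpha>0^2 / 8 * ?S" using that S_nn by (meson mult_right_mono order_trans)
    also have "\<dots> = C / 8 * (\<alpha>0^2 * ?S)" by simp
    also have "\<dots> \<le> C / 8 * 8" using g that(3) by (intro mult_left_mono) auto
    finally show ?thesis by simp
  qed
  have w: "norm (W n - W 0) \<le> C1" by (rule C[OF d(1) cW_r0 C_pos(1)])
  have a: "norm (A n - A 0) \<le> C2" by (rule C[OF d(2) cA_r0 C_pos(2)])
  have bb: "norm (b n - b 0) \<le> C3" by (rule C[OF d(3) cb_r0 C_pos(3)])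
  have "specnorm (W n) \<le> specnorm (W 0) + specnorm (W n - W 0)"
    using specnorm_triangle[of "W 0" "W n - W 0"] by simp
  also have "\<dots> \<le> l1" using w specnorm_le_norm[of "W n - W 0"] l1 by simp
  finally have 1: "specnorm (W n) \<le> l1" .
  have "specnorm (A n) \<le> specnorm (A 0) + specnorm (A n - A 0)"
    using specnorm_triangle[of "A 0" "A n - A 0"] by simp
  also have "\<dots> \<le> l2" using a specnorm_le_norm[of "A n - A 0"] l2 by simp
  finally have 2: "specnorm (A n) \<le> l2" .
  have "norm (b n) \<le> norm (b 0) + norm (b n - b 0)" by (metis norm_triangle_sub add.commute)
  hence 3: "norm (b n) \<le> l3" using bb l3 by simp
  show ?thesis using 1 2 3 by simp
qed

end

lemma div_aux:
  fixes u z Q :: real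
  assumes "0 < u" "u * z \<le> Q / u"
  shows "z \<le> Q / u^2"
proof -
  have "u * z * u \<le> Q" using assms by (simp add: pos_le_divide_eq)
  hence "z * u^2 \<le> Q" by (simp add: power2_eq_square mult_ac)
  thus ?thesis using assms(1) by (simp add: pos_le_divide_eq)
qed

context gdset begin

lemma sigma_next:
  assumes "\<forall>j<n. inball j \<and> R j \<le> \<rho>^j * r0"
  shows "\<alpha>0 / 2 \<le> sigma_min (Z n)"
proof -
  let ?S = "\<Sum>j<n. \<eta> * \<rho>^j"
  have bn: "inball n" by (rule ball_next[OF assms])
  have d: "norm (W n - W 0) \<le> cW * r0 * ?S" "norm (A n - A 0) \<le> cA * r0 * ?S"
    using disp[OF assms] by auto
  have lip: "(1 - \<gamma> * specnorm (A n)) * norm (Z 0 - Z n)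
     \<le> \<gamma> * norm (Z 0) * specnorm (A 0 - A n) + norm X * specnorm (W 0 - W n)"
    by (rule Zeq_lip) (use gpos gs1[OF inball0] gs1[OF bn] in auto)
  have "\<gamma> * norm (Z 0) * specnorm (A 0 - A n) \<le> \<gamma> * (fx * l1 / (1 - g0)) * (cA * r0 * ?S)"
  proof (rule mult_mono)
    show "\<gamma> * norm (Z 0) \<le> \<gamma> * (fx * l1 / (1 - g0))" by (rule mult_left_mono[OF Z_bound[OF inball0]]) (use gpos in simp)
    have "specnorm (A 0 - A n) \<le> norm (A 0 - A n)" by (rule specnorm_le_norm)
    also have "\<dots> = norm (A n - A 0)" by (rule norm_minus_commute)
    finally show "specnorm (A 0 - A n) \<le> cA * r0 * ?S" using d(2) by linarith
    show "0 \<le> \<gamma> * (fx * l1 / (1 - g0))" using gpos fxnn l1pos omg by simp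
    show "0 \<le> specnorm (A 0 - A n)" by (rule specnorm_nonneg)
  qed
  moreover have "norm X * specnorm (W 0 - W n) \<le> fx * (cW * r0 * ?S)"
  proof -
    have "specnorm (W 0 - W n) \<le> norm (W 0 - W n)" by (rule specnorm_le_norm)
    also have "\<dots> = norm (W n - W 0)" by (rule norm_minus_commute)
    finally have "specnorm (W 0 - W n) \<le> cW * r0 * ?S" using d(1) by linarith
    hence "fx * specnorm (W 0 - W n) \<le> fx * (cW * r0 * ?S)" by (rule mult_left_mono[OF _ fxnn])
    thus ?thesis using fx by simp
  qed
  ultimately have "(1 - \<gamma> * specnorm (A n)) * norm (Z 0 - Z n)
      \<le> (\<gamma> * (fx * l1 / (1 - g0)) * cA + fx * cW) * (r0 * ?S)"
    using lip by (simp add: algebra_simps)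
  also have "\<dots> = \<kappa> * fx^2 * l3 / (1 - g0) * (r0 * ?S)" by (simp only: lipc)
  finally have l: "(1 - \<gamma> * specnorm (A n)) * norm (Z 0 - Z n) \<le> \<kappa> * fx^2 * l3 / (1 - g0) * (r0 * ?S)" .
  have "(1 - g0) * norm (Z 0 - Z n) \<le> (1 - \<gamma> * specnorm (A n)) * norm (Z 0 - Z n)"
    using gs[OF bn] by (simp add: mult_right_mono)
  with l have "(1 - g0) * norm (Z 0 - Z n) \<le> \<kappa> * fx^2 * l3 / (1 - g0) * (r0 * ?S)" by simp
  hence "(1 - g0) * norm (Z 0 - Z n) \<le> (\<kappa> * fx^2 * l3 * (r0 * ?S)) / (1 - g0)" by simp
  hence "norm (Z 0 - Z n) \<le> (\<kappa> * fx^2 * l3 * (r0 * ?S)) / (1 - g0)^2" by (rule div_aux[OF omg])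
  hence "norm (Z 0 - Z n) \<le> \<kappa> * fx^2 * l3 / (1 - g0)^2 * (r0 * ?S)" by simp
  also have "\<dots> = (\<kappa> * (16 * l3 / (1 - g0)^2) * fx^2 * r0) / 16 * ?S" by (simp add: field_simps)
  also have "\<dots> \<le> \<alpha>0^3 / 16 * ?S" using h2 S_nn by (intro mult_right_mono divide_right_mono) auto
  also have "\<dots> = \<alpha>0 / 16 * (\<alpha>0^2 * ?S)" by (simp add: power3_eq_cube power2_eq_square)
  also have "\<dots> \<le> \<alpha>0 / 16 * 8" using geo a0nn by (intro mult_left_mono) auto
  finally have z: "norm (Z 0 - Z n) \<le> \<alpha>0 / 2" by simp
  have "sigma_min (Z 0) - norm (Z 0 - Z n) \<le> sigma_min (Z n)" by (rule sigma_min_perturb)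
  thus ?thesis using z a0 by simp
qed

lemma res_step:
  assumes bk: "inball k" and bk1: "inball (Suc k)" and sg: "\<alpha>0 / 2 \<le> sigma_min (Z k)"
  shows "R (Suc k) \<le> \<rho> * R k"
proof -
  define r where "r = yhat \<gamma> X (W k) (A k) (b k) - y"
  define g where "g = transpose (Z k) *v r"
  have gb: "gradb \<gamma> X y (W k) (A k) (b k) = g" unfolding gradb_def g_def r_def by simp
  have b': "b (Suc k) = b k - \<eta> *\<^sub>R g" using GDb[of k] gb by simp
  have rr: "yhat \<gamma> X (W (Suc k)) (A (Suc k)) (b (Suc k)) - y
      = (r - \<eta> *\<^sub>R (Z k *v g)) + (Z (Suc k) - Z k) *v b (Suc k)"
  proof -
    have "Z (Suc k) *v b (Suc k) = Z k *v b (Suc k) + (Z (Suc k) - Z k) *v b (Suc k)"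
      by (simp add: matrix_vector_mult_diff_rdistrib)
    also have "Z k *v b (Suc k) = Z k *v b k - \<eta> *\<^sub>R (Z k *v g)"
      unfolding b' by (simp add: matrix_vector_right_distrib[symmetric] matrix_vector_mult_diff_distrib matrix_vector_mult_scaleR)
    finally show ?thesis unfolding yhat_def r_def by (simp add: algebra_simps)
  qed
  have Zs: "\<eta> * (norm (Z k))^2 \<le> 1/2"
  proof -
    have "(norm (Z k))^2 \<le> (fx * l1 / (1 - g0))^2" using Z_bound[OF bk] by (rule power_mono) simp
    hence "\<eta> * (norm (Z k))^2 \<le> \<eta> * (fx * l1 / (1 - g0))^2" using h4 by (simp add: mult_left_mono)
    also have "\<dots> = \<eta> * (l1^2 * fx^2) / (1 - g0)^2" by (simp add: power_divide power_mult_distrib mult_ac)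
    also have "\<dots> \<le> ((1 - g0)^2 / 2) / (1 - g0)^2" using eta_small omg by (intro divide_right_mono) auto
    also have "\<dots> = 1/2" using omg by simp
    finally show ?thesis .
  qed
  have ig: "inner r (Z k *v g) = (norm g)^2"
  proof -
    have "inner r (Z k *v g) = inner (r v* Z k) g" by (rule dot_lmul_matrix[symmetric])
    also have "r v* Z k = g" unfolding g_def by simp
    finally show ?thesis by (simp add: power2_norm_eq_inner)
  qed
  have gl: "\<alpha>0 / 2 * norm r \<le> norm g"
  proof -
    have "\<alpha>0 / 2 * norm r \<le> sigma_min (Z k) * norm r" by (rule mult_right_mono[OF sg norm_ge_zero])
    also have "\<dots> \<le> norm g" unfolding g_def by (rule sigma_min_lower)
    finally show ?thesis .
  qed
  have gl2: "t / 4 * (norm r)^2 \<le> \<eta> * (norm g)^2"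
  proof -
    have "(\<alpha>0 / 2 * norm r)^2 \<le> (norm g)^2" using gl a0nn by (intro power_mono) auto
    moreover have "(\<alpha>0 / 2 * norm r)^2 = \<alpha>0^2 / 4 * (norm r)^2" by (simp add: power_mult_distrib power_divide)
    ultimately have "\<alpha>0^2 / 4 * (norm r)^2 \<le> (norm g)^2" by simp
    hence "\<eta> * (\<alpha>0^2 / 4 * (norm r)^2) \<le> \<eta> * (norm g)^2" using h4 by (simp add: mult_left_mono)
    thus ?thesis unfolding t by (simp add: mult_ac)
  qed
  have e: "(norm (r - \<eta> *\<^sub>R v))^2 = (norm r)^2 - 2 * \<eta> * inner r v + \<eta>^2 * (norm v)^2" for v :: "real^'N"
    unfolding power2_norm_eq_inner by (simp add: inner_diff_left inner_diff_right inner_commute algebra_simps power2_eq_square)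
  have zg: "\<eta>^2 * (norm (Z k *v g))^2 \<le> \<eta> / 2 * (norm g)^2"
  proof -
    have "(norm (Z k *v g))^2 \<le> (norm (Z k) * norm g)^2" using mv_bound by (rule power_mono) simp
    hence "\<eta>^2 * (norm (Z k *v g))^2 \<le> \<eta>^2 * (norm (Z k) * norm g)^2" by (simp add: mult_left_mono)
    also have "\<dots> = \<eta> * (\<eta> * (norm (Z k))^2) * (norm g)^2" by (simp add: power2_eq_square mult_ac)
    also have "\<dots> \<le> \<eta> * (1/2) * (norm g)^2" using Zs h4 by (intro mult_right_mono mult_left_mono) auto
    finally show ?thesis by simp
  qed
  have p1sq: "(norm (r - \<eta> *\<^sub>R (Z k *v g)))^2 \<le> (1 - 3*t/8) * (norm r)^2"
    unfolding e ig using zg gl2 by (simp add: algebra_simps)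
  have p1: "norm (r - \<eta> *\<^sub>R (Z k *v g)) \<le> sqrt (1 - 3*t/8) * norm r"
  proof -
    have "norm (r - \<eta> *\<^sub>R (Z k *v g)) \<le> sqrt ((1 - 3*t/8) * (norm r)^2)" using p1sq by (rule real_le_rsqrt)
    also have "\<dots> = sqrt (1 - 3*t/8) * norm r" by (simp add: real_sqrt_mult)
    finally show ?thesis .
  qed
  have lip: "(1 - \<gamma> * specnorm (A (Suc k))) * norm (Z k - Z (Suc k))
     \<le> \<gamma> * norm (Z k) * specnorm (A k - A (Suc k)) + norm X * specnorm (W k - W (Suc k))"
    by (rule Zeq_lip) (use gpos gs1[OF bk] gs1[OF bk1] in auto)
  have Rr: "R k = norm r" unfolding r_def ..
  have "\<gamma> * norm (Z k) * specnorm (A k - A (Suc k)) \<le> \<gamma> * (fx * l1 / (1 - g0)) * (cA * (\<eta> * norm r))"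
  proof (rule mult_mono)
    show "\<gamma> * norm (Z k) \<le> \<gamma> * (fx * l1 / (1 - g0))" by (rule mult_left_mono[OF Z_bound[OF bk]]) (use gpos in simp)
    have "specnorm (A k - A (Suc k)) \<le> norm (A k - A (Suc k))" by (rule specnorm_le_norm)
    also have "\<dots> = norm (A (Suc k) - A k)" by (rule norm_minus_commute)
    also have "\<dots> = \<eta> * norm (gradA \<gamma> X y (W k) (A k) (b k))" by (rule stepA)
    also have "\<dots> \<le> \<eta> * (cA * R k)" by (rule mult_left_mono[OF gA_bound[OF bk]]) (use h4 in simp)
    finally show "specnorm (A k - A (Suc k)) \<le> cA * (\<eta> * norm r)" unfolding Rr by (simp add: mult_ac)
    show "0 \<le> \<gamma> * (fx * l1 / (1 - g0))" using gpos fxnn l1pos omg by simp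
    show "0 \<le> specnorm (A k - A (Suc k))" by (rule specnorm_nonneg)
  qed
  moreover have "norm X * specnorm (W k - W (Suc k)) \<le> fx * (cW * (\<eta> * norm r))"
  proof -
    have "specnorm (W k - W (Suc k)) \<le> norm (W k - W (Suc k))" by (rule specnorm_le_norm)
    also have "\<dots> = norm (W (Suc k) - W k)" by (rule norm_minus_commute)
    also have "\<dots> = \<eta> * norm (gradW \<gamma> X y (W k) (A k) (b k))" by (rule stepW)
    also have "\<dots> \<le> \<eta> * (cW * R k)" by (rule mult_left_mono[OF gW_bound[OF bk]]) (use h4 in simp)
    finally have "specnorm (W k - W (Suc k)) \<le> cW * (\<eta> * norm r)" unfolding Rr by (simp add: mult_ac)
    hence "fx * specnorm (W k - W (Suc k)) \<le> fx * (cW * (\<eta> * norm r))" by (rule mult_left_mono[OF _ fxnn])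
    thus ?thesis using fx by simp
  qed
  ultimately have "(1 - \<gamma> * specnorm (A (Suc k))) * norm (Z k - Z (Suc k))
      \<le> (\<gamma> * (fx * l1 / (1 - g0)) * cA + fx * cW) * (\<eta> * norm r)"
    using lip by (simp add: algebra_simps)
  also have "\<dots> = \<kappa> * fx^2 * l3 / (1 - g0) * (\<eta> * norm r)" by (simp only: lipc)
  finally have l: "(1 - \<gamma> * specnorm (A (Suc k))) * norm (Z k - Z (Suc k)) \<le> \<kappa> * fx^2 * l3 / (1 - g0) * (\<eta> * norm r)" .
  have "(1 - g0) * norm (Z k - Z (Suc k)) \<le> (1 - \<gamma> * specnorm (A (Suc k))) * norm (Z k - Z (Suc k))"
    using gs[OF bk1] by (simp add: mult_right_mono)
  with l have "(1 - g0) * norm (Z k - Z (Suc k)) \<le> \<kappa> * fx^2 * l3 / (1 - g0) * (\<eta> * norm r)" by simp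
  hence "(1 - g0) * norm (Z k - Z (Suc k)) \<le> (\<kappa> * fx^2 * l3 * (\<eta> * norm r)) / (1 - g0)" by simp
  hence "norm (Z k - Z (Suc k)) \<le> (\<kappa> * fx^2 * l3 * (\<eta> * norm r)) / (1 - g0)^2" by (rule div_aux[OF omg])
  hence zd: "norm (Z (Suc k) - Z k) \<le> \<kappa> * fx^2 * l3 / (1 - g0)^2 * (\<eta> * norm r)"
    by (simp add: norm_minus_commute)
  have p2: "norm ((Z (Suc k) - Z k) *v b (Suc k)) \<le> t / 16 * norm r"
  proof -
    have "norm ((Z (Suc k) - Z k) *v b (Suc k)) \<le> norm (Z (Suc k) - Z k) * norm (b (Suc k))" by (rule mv_bound)
    also have "\<dots> \<le> (\<kappa> * fx^2 * l3 / (1 - g0)^2 * (\<eta> * norm r)) * l3"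
      using zd bk1 kap1 l3pos h4 by (intro mult_mono) auto
    also have "\<dots> = (\<kappa> * (16 * l3^2 / (1 - g0)^2) * fx^2) / 16 * (\<eta> * norm r)"
    proof -
      have "\<And>u::real. u \<noteq> 0 \<Longrightarrow> (\<kappa> * fx^2 * l3 / u^2 * (\<eta> * norm r)) * l3 = (\<kappa> * (16 * l3^2 / u^2) * fx^2) / 16 * (\<eta> * norm r)"
        by (simp add: field_simps power2_eq_square)
      from this[of "1 - g0"] show ?thesis using omg by simp
    qed
    also have "\<dots> \<le> \<alpha>0^2 / 16 * (\<eta> * norm r)" using h3 h4 by (intro mult_right_mono divide_right_mono) auto
    also have "\<dots> = t / 16 * norm r" unfolding t by simp
    finally show ?thesis .
  qed
  have "R (Suc k) \<le> norm (r - \<eta> *\<^sub>R (Z k *v g)) + norm ((Z (Suc k) - Z k) *v b (Suc k))"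
    unfolding rr by (rule norm_triangle_ineq)
  also have "\<dots> \<le> (sqrt (1 - 3*t/8) + t/16) * norm r" using p1 p2 by (simp add: algebra_simps)
  also have "\<dots> \<le> \<rho> * norm r" unfolding rho using sqrt_step[of t] t_nn t_small
    by (intro mult_right_mono) auto
  finally show ?thesis unfolding Rr .
qed

lemma inv: "\<forall>j\<le>k. inball j \<and> \<alpha>0 / 2 \<le> sigma_min (Z j) \<and> R j \<le> \<rho>^j * r0"
proof (induction k)
  case 0
  show ?case using inball0 a0 a0nn r0 by simp
next
  case (Suc k)
  have pre: "\<forall>j<Suc k. inball j \<and> R j \<le> \<rho>^j * r0" using Suc.IH by (simp add: less_Suc_eq_le)
  have b1: "inball (Suc k)" by (rule ball_next[OF pre])
  have s1: "\<alpha>0 / 2 \<le> sigma_min (Z (Suc k))" by (rule sigma_next[OF pre])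
  have "R (Suc k) \<le> \<rho> * R k" using res_step[of k] Suc.IH b1 by simp
  also have "\<dots> \<le> \<rho> * (\<rho>^k * r0)" using Suc.IH rho_nn by (simp add: mult_left_mono)
  finally have r1: "R (Suc k) \<le> \<rho>^Suc k * r0" by (simp add: mult_ac)
  show ?case using Suc.IH b1 s1 r1 by (auto simp: le_Suc_eq)
qed

end

theorem theorem2:
  fixes X :: "real^'d^'N" and y :: "real^'N"
    and W :: "nat \<Rightarrow> real^'m^'d" and A :: "nat \<Rightarrow> real^'m^'m" and b :: "nat \<Rightarrow> real^'m"
    and \<gamma> \<eta> C1 C2 C3 :: real
  assumes C_pos: "C1 > 0" "C2 > 0" "C3 > 0"
    and GD: "\<And>k. vecm (W (Suc k)) = vecm (W k) - \<eta> *\<^sub>R gradW \<gamma> X y (W k) (A k) (b k)"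
            "\<And>k. vecm (A (Suc k)) = vecm (A k) - \<eta> *\<^sub>R gradA \<gamma> X y (W k) (A k) (b k)"
            "\<And>k. b (Suc k) = b k - \<eta> *\<^sub>R gradb \<gamma> X y (W k) (A k) (b k)"
    and gamma_pos: "\<gamma> > 0"
    and gamma0: "\<gamma> * (specnorm (A 0) + C2) < 1"
    and H1: "let \<alpha>0 = sigma_min (Zeq \<gamma> X (W 0) (A 0));
               lam1 = specnorm (W 0) + C1; lam2 = specnorm (A 0) + C2; lam3 = norm (b 0) + C3;
               \<gamma>0 = \<gamma> * lam2;
               lam0 = Max {lam1 / C3, \<gamma>0 * lam1 * lam3 / ((1 - \<gamma>0) * C2 * lam2), lam3 / C1};
               \<kappa> = 1 + \<gamma>0^2 / (1 - \<gamma>0)^2 * (lam1^2 / lam2^2);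
               r0 = norm (yhat \<gamma> X (W 0) (A 0) (b 0) - y);
               lambar = \<kappa> * inverse ((\<kappa> * inverse (lam1^2) + inverse (lam3^2))^2)
             in \<alpha>0^2 \<ge> 8 / (1 - \<gamma>0) * lam0 * frob X * r0
              \<and> \<alpha>0^3 \<ge> \<kappa> * (16 * lam3 / (1 - \<gamma>0)^2) * (frob X)^2 * r0
              \<and> \<alpha>0^2 \<ge> \<kappa> * (16 * lam3^2 / (1 - \<gamma>0)^2) * (frob X)^2
              \<and> 0 < \<eta>
              \<and> \<eta> * \<alpha>0^2 < 4
              \<and> \<eta> * (lam1^4 * lam3^2 * (frob X)^2) < 2 * (1 - \<gamma>0)^2 * lambar"
  shows "\<forall>k. let \<alpha>0 = sigma_min (Zeq \<gamma> X (W 0) (A 0))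
             in specnorm (W k) \<le> specnorm (W 0) + C1
              \<and> specnorm (A k) \<le> specnorm (A 0) + C2
              \<and> norm (b k) \<le> norm (b 0) + C3
              \<and> (\<exists>!Z. is_equil \<gamma> X (W k) (A k) Z)
              \<and> sigma_min (Zeq \<gamma> X (W k) (A k)) \<ge> \<alpha>0 / 2
              \<and> loss \<gamma> X y (W k) (A k) (b k)
                  \<le> (1 - \<eta> * \<alpha>0^2 / 4)^k * loss \<gamma> X y (W 0) (A 0) (b 0)"
proof -
  define \<alpha>0 where "\<alpha>0 = sigma_min (Zeq \<gamma> X (W 0) (A 0))"
  define l1 where "l1 = specnorm (W 0) + C1"
  define l2 where "l2 = specnorm (A 0) + C2"
  define l3 where "l3 = norm (b 0) + C3"
  define g0 where "g0 = \<gamma> * l2"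
  define l0 where "l0 = Max {l1 / C3, g0 * l1 * l3 / ((1 - g0) * C2 * l2), l3 / C1}"
  define \<kappa> where "\<kappa> = 1 + g0^2 / (1 - g0)^2 * (l1^2 / l2^2)"
  define r0 where "r0 = norm (yhat \<gamma> X (W 0) (A 0) (b 0) - y)"
  define lb where "lb = \<kappa> * inverse ((\<kappa> * inverse (l1^2) + inverse (l3^2))^2)"
  define fx where "fx = norm X"
  define t where "t = \<eta> * \<alpha>0^2"
  define \<rho> where "\<rho> = sqrt (1 - t/4)"
  have H: "\<alpha>0^2 \<ge> 8 / (1 - g0) * l0 * fx * r0
              \<and> \<alpha>0^3 \<ge> \<kappa> * (16 * l3 / (1 - g0)^2) * fx^2 * r0
              \<and> \<alpha>0^2 \<ge> \<kappa> * (16 * l3^2 / (1 - g0)^2) * fx^2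
              \<and> 0 < \<eta>
              \<and> \<eta> * \<alpha>0^2 < 4
              \<and> \<eta> * (l1^4 * l3^2 * fx^2) < 2 * (1 - g0)^2 * lb"
    using H1 unfolding Let_def frob_eq
    unfolding \<alpha>0_def l1_def l2_def l3_def g0_def l0_def \<kappa>_def r0_def lb_def fx_def .
  interpret gdset X y W A b \<gamma> \<eta> C1 C2 C3 \<alpha>0 l1 l2 l3 g0 l0 \<kappa> r0 lb fx t \<rho>
  proof
    show "g0 < 1" using gamma0 unfolding g0_def l2_def .
  qed (use C_pos GD gamma_pos H in \<open>simp_all add: \<alpha>0_def l1_def l2_def l3_def g0_def l0_def \<kappa>_def r0_def lb_def fx_def t_def \<rho>_def\<close>)
  show ?thesis
  proof (intro allI)
    fix k
    have I: "inball k" "\<alpha>0 / 2 \<le> sigma_min (Z k)" "R k \<le> \<rho>^k * r0" using inv[of k] by auto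
    have eu: "\<exists>!Z. is_equil \<gamma> X (W k) (A k) Z"
      by (rule equil_unique) (use gamma_pos gs1[OF I(1)] in auto)
    have "(R k)^2 \<le> (\<rho>^k * r0)^2" using I(3) by (rule power_mono) simp
    also have "\<dots> = (\<rho>^2)^k * r0^2" by (simp add: power_mult_distrib power_mult[symmetric] mult.commute)
    also have "\<dots> = (1 - \<eta> * \<alpha>0^2 / 4)^k * r0^2" unfolding rho_sq t by simp
    finally have "loss \<gamma> X y (W k) (A k) (b k) \<le> (1 - \<eta> * \<alpha>0^2 / 4)^k * loss \<gamma> X y (W 0) (A 0) (b 0)"
      unfolding loss_def r0 by simp
    thus "let \<alpha>0 = sigma_min (Zeq \<gamma> X (W 0) (A 0))
             in specnorm (W k) \<le> specnorm (W 0) + C1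
              \<and> specnorm (A k) \<le> specnorm (A 0) + C2
              \<and> norm (b k) \<le> norm (b 0) + C3
              \<and> (\<exists>!Z. is_equil \<gamma> X (W k) (A k) Z)
              \<and> sigma_min (Zeq \<gamma> X (W k) (A k)) \<ge> \<alpha>0 / 2
              \<and> loss \<gamma> X y (W k) (A k) (b k)
                  \<le> (1 - \<eta> * \<alpha>0^2 / 4)^k * loss \<gamma> X y (W 0) (A 0) (b 0)"
      using I eu unfolding Let_def \<alpha>0_def[symmetric] l1_def[symmetric] l2_def[symmetric] l3_def[symmetric]
      by simp
  qed
qed


end
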